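(* Let $N\ge3$ be odd, let $A=A(h)$ and $C=e_2^T$ be as in the context, and assume $h_\alpha,h_\beta,h_1,\dots,h_{N-1}$ are all nonzero. Let $P$ be the $(N+2)\times(N+2)$ matrix whose first $N+1$ rows are $C,CA,\dots,CA^{N}$ and whose last row is $(0,\dots,0,1)$, partitioned as $$P=\begin{pmatrix}\bar P & \mathbf p\\ \mathbf 0^T & 1\end{pmatrix},\qquad \bar P\in\mathbb{R}^{(N+1)\times(N+1)},\ \mathbf p\in\mathbb{R}^{N+1}.$$ Then: (i) $\mathbf p=\big(0,\dots,0,\ h_\beta\prod_{i=1}^{N-1}h_i\big)^T$; (ii) $\det\bar P=h_\alpha h_\beta^{N-1}h_{N-2}^3\prod_{i=1}^{(N-3)/2}h_{2i-1}^{N+2-2i}h_{2i}^{N-1-2i}\neq0$; (iii) with $K=h_\beta^{N-1}\prod_{i=1}^{N-2}h_i^{N-1-i}$, the last ($(N+1)$-th) column of $\bar P^{-1}$ has entries $(\bar P^{-1})_{k,N+1}=0$ for every even $k$, $(\bar P^{-1})_{1,N+1}=-K/\det\bar P$, and for odd $k$ with $3\le k\le N$, $$(\bar P^{-1})_{k,N+1}=-\frac{K}{\det\bar P}\cdot\frac{h_\alpha\prod_{j=1}^{(k-3)/2}h_{2j-1}}{h_\beta\prod_{j=1}^{(k-3)/2}h_{2j}}.$$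
   Context: For an integer $N\ge1$ and real parameters $h=(h_\alpha,h_\beta,h_1,\dots,h_{N-1})$, set $(c_1,c_2,c_3,\dots,c_{N+1})=(h_\alpha,h_\beta,h_1,\dots,h_{N-1})$ and let $A(h)$ be the real $(N+2)\times(N+2)$ tridiagonal matrix with $A_{j,j+1}=c_j$, $A_{j+1,j}=-c_j$ for $j=1,\dots,N+1$ and all other entries zero. $e_j$ denotes the $j$-th standard basis column vector; empty products equal $1$. *)

theory Defs
  imports "Jordan_Normal_Form.Determinant"
begin

definition coef :: "real \<Rightarrow> real \<Rightarrow> (nat \<Rightarrow> real) \<Rightarrow> nat \<Rightarrow> real" where
  "coef ha hb h j = (if j = 1 then ha else if j = 2 then hb else h (j - 2))"

text \<open>The (N+2)x(N+2) tridiagonal matrix A(h); JNF matrices are 0-indexed,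
  so entry (i,j) here is entry (i+1,j+1) of the paper.\<close>
definition Amat :: "nat \<Rightarrow> real \<Rightarrow> real \<Rightarrow> (nat \<Rightarrow> real) \<Rightarrow> real mat" where
  "Amat N ha hb h = mat (N+2) (N+2) (\<lambda>(i,j).
     if j = i + 1 then coef ha hb h (i+1)
     else if i = j + 1 then - coef ha hb h (j+1) else 0)"

definition Cmat :: "nat \<Rightarrow> real mat" where
  "Cmat N = mat 1 (N+2) (\<lambda>(i,j). if j = 1 then 1 else 0)"

definition Pmat :: "nat \<Rightarrow> real \<Rightarrow> real \<Rightarrow> (nat \<Rightarrow> real) \<Rightarrow> real mat" where
  "Pmat N ha hb h = mat (N+2) (N+2) (\<lambda>(i,j).
     if i \<le> N then (Cmat N * (Amat N ha hb h ^\<^sub>m i)) $$ (0, j)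
     else if j = N + 1 then 1 else 0)"

definition Pbar :: "nat \<Rightarrow> real \<Rightarrow> real \<Rightarrow> (nat \<Rightarrow> real) \<Rightarrow> real mat" where
  "Pbar N ha hb h = mat (N+1) (N+1) (\<lambda>(i,j). Pmat N ha hb h $$ (i,j))"

definition pvec :: "nat \<Rightarrow> real \<Rightarrow> real \<Rightarrow> (nat \<Rightarrow> real) \<Rightarrow> real vec" where
  "pvec N ha hb h = vec (N+1) (\<lambda>i. Pmat N ha hb h $$ (i, N+1))"

end

theory Submission imports Defs begin


lemma prod_split_even: "(\<Prod>i\<in>{1..2*p}. f i) = (\<Prod>t\<in>{1..p}. f (2*t-1)) * (\<Prod>t\<in>{1..p}. f (2*t))"
  for f :: "nat \<Rightarrow> 'a::comm_monoid_mult"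
proof (induction p)
  case 0 then show ?case by simp
next
  case (Suc p)
  have "(\<Prod>i\<in>{1..2*Suc p}. f i) = (\<Prod>i\<in>{1..2*p}. f i) * f (2*p+1) * f (2*p+2)"
    by (simp add: prod.cl_ivl_Suc mult.assoc)
  then show ?case using Suc by (simp add: prod.cl_ivl_Suc mult_ac)
qed

lemma prod_split_odd: "(\<Prod>i\<in>{1..2*p+1}. f i) = (\<Prod>t\<in>{1..p+1}. f (2*t-1)) * (\<Prod>t\<in>{1..p}. f (2*t))"
  for f :: "nat \<Rightarrow> 'a::comm_monoid_mult"
proof -
  have "(\<Prod>i\<in>{1..2*p+1}. f i) = (\<Prod>i\<in>{1..2*p}. f i) * f (2*p+1)"
    by (simp add: prod.cl_ivl_Suc)
  then show ?thesis using prod_split_even[of f p] by (simp add: prod.cl_ivl_Suc mult_ac)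
qed

lemma prod_pow_step: "(\<Prod>i\<in>{1..Suc p}. f i ^ (Suc p + 1 - i)) = (\<Prod>i\<in>{1..p}. f i ^ (p + 1 - i)) * (\<Prod>i\<in>{1..Suc p}. f i)"
  for f :: "nat \<Rightarrow> 'a::comm_monoid_mult"
proof -
  have "(\<Prod>i\<in>{1..Suc p}. f i ^ (Suc p + 1 - i)) = (\<Prod>i\<in>{1..p}. f i ^ (Suc p + 1 - i)) * f (Suc p)"
    by (simp add: prod.cl_ivl_Suc)
  also have "(\<Prod>i\<in>{1..p}. f i ^ (Suc p + 1 - i)) = (\<Prod>i\<in>{1..p}. f i ^ (p + 1 - i) * f i)"
  proof (rule prod.cong[OF refl])
    fix i assume "i \<in> {1..p}"
    then have "Suc p + 1 - i = Suc (p + 1 - i)" by auto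
    then show "f i ^ (Suc p + 1 - i) = f i ^ (p + 1 - i) * f i" by (simp add: mult.commute)
  qed
  also have "\<dots> = (\<Prod>i\<in>{1..p}. f i ^ (p + 1 - i)) * (\<Prod>i\<in>{1..p}. f i)" by (rule prod.distrib)
  finally show ?thesis by (simp add: prod.cl_ivl_Suc mult_ac)
qed



declare sum.lessThan_Suc[simp del] prod.lessThan_Suc[simp del]

context fixes N :: nat and ha hb :: real and h :: "nat \<Rightarrow> real"
begin

definition "aa i = coef ha hb h (i+1)"
definition "rr k j = (Cmat N * (Amat N ha hb h ^\<^sub>m k)) $$ (0, j)"
definition "gg m = (\<Prod>i<m. aa (2*i) / aa (2*i+1))"
definition "kv j = (if even j then gg (j div 2) else 0)"

lemma A_carrier: "Amat N ha hb h \<in> carrier_mat (N+2) (N+2)"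
  by (simp add: Amat_def)

lemma A_idx: "i < N+2 \<Longrightarrow> j < N+2 \<Longrightarrow> Amat N ha hb h $$ (i,j) =
   (if j = i + 1 then aa i else if i = j + 1 then - aa j else 0)"
  by (simp add: Amat_def aa_def)

lemma C_carrier: "Cmat N \<in> carrier_mat 1 (N+2)"
  by (simp add: Cmat_def)

lemma rr_0: "j < N+2 \<Longrightarrow> rr 0 j = (if j = 1 then 1 else 0)"
  using C_carrier A_carrier by (simp add: rr_def Cmat_def)

lemma rr_Suc: "j < N+2 \<Longrightarrow> rr (Suc k) j = (\<Sum>i<N+2. rr k i * Amat N ha hb h $$ (i,j))"
proof -
  let ?A = "Amat N ha hb h" and ?C = "Cmat N"
  have pk: "?A ^\<^sub>m k \<in> carrier_mat (N+2) (N+2)" using A_carrier by (rule pow_carrier_mat)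
  have "?C * ?A ^\<^sub>m Suc k = (?C * ?A ^\<^sub>m k) * ?A"
    using assoc_mult_mat[OF C_carrier pk A_carrier] by simp
  moreover assume j: "j < N+2"
  ultimately show ?thesis using C_carrier A_carrier pk
    unfolding rr_def by (simp add: scalar_prod_def lessThan_atLeast0)
qed

lemma rr_zero: "j < N+2 \<Longrightarrow> k+1 < j \<Longrightarrow> rr k j = 0"
proof (induction k arbitrary: j)
  case 0 then show ?case by (simp add: rr_0)
next
  case (Suc k)
  have "rr (Suc k) j = (\<Sum>i<N+2. rr k i * Amat N ha hb h $$ (i,j))" by (rule rr_Suc[OF Suc.prems(1)])
  also have "\<dots> = 0"
  proof (rule sum.neutral, intro ballI)
    fix i assume i: "i \<in> {..<N+2}"
    show "rr k i * Amat N ha hb h $$ (i,j) = 0"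
    proof (cases "k+1 < i")
      case True then show ?thesis using Suc.IH i by simp
    next
      case False then show ?thesis using i Suc.prems by (simp add: A_idx)
    qed
  qed
  finally show ?case .
qed

lemma rr_lead: "k+1 < N+2 \<Longrightarrow> rr k (k+1) = (\<Prod>i\<in>{1..k}. aa i)"
proof (induction k)
  case 0 then show ?case by (simp add: rr_0)
next
  case (Suc k)
  have "rr (Suc k) (Suc k + 1) = (\<Sum>i<N+2. rr k i * Amat N ha hb h $$ (i,Suc k + 1))"
    using Suc.prems by (intro rr_Suc) simp
  also have "\<dots> = (\<Sum>i<N+2. if i = k+1 then rr k (k+1) * aa (k+1) else 0)"
  proof (rule sum.cong[OF refl])
    fix i assume i: "i \<in> {..<N+2}"
    show "rr k i * Amat N ha hb h $$ (i,Suc k + 1) = (if i = k+1 then rr k (k+1) * aa (k+1) else 0)"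
    proof (cases "k+1 < i")
      case True then show ?thesis using rr_zero[of i k] i by simp
    next
      case False then show ?thesis using i Suc.prems by (simp add: A_idx)
    qed
  qed
  also have "\<dots> = rr k (k+1) * aa (k+1)" using Suc.prems by simp
  finally show ?case using Suc by (simp add: prod.cl_ivl_Suc)
qed

lemma rr_lead': "k \<le> N \<Longrightarrow> rr k (Suc k) = (\<Prod>i\<in>{1..k}. aa i)"
  using rr_lead[of k] by simp

lemma aa_nz: assumes "ha \<noteq> 0" "hb \<noteq> 0" "\<forall>i\<in>{1..N-1}. h i \<noteq> 0" "i \<le> N"
  shows "aa i \<noteq> 0"
proof -
  have "i \<ge> 2 \<Longrightarrow> i - 1 \<in> {1..N-1}" using assms(4) by auto
  then show ?thesis using assms by (auto simp: aa_def coef_def)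
qed

lemma gg_Suc: "gg (Suc m) = gg m * (aa (2*m) / aa (2*m+1))"
  by (simp add: gg_def prod.lessThan_Suc)

lemma A_kv: assumes "ha \<noteq> 0" "hb \<noteq> 0" "\<forall>i\<in>{1..N-1}. h i \<noteq> 0" "odd N" "i < N+2"
  shows "(\<Sum>j<N+2. Amat N ha hb h $$ (i,j) * kv j) = 0"
proof (cases "even i")
  case True
  show ?thesis
  proof (rule sum.neutral, intro ballI)
    fix j assume j: "j \<in> {..<N+2}"
    show "Amat N ha hb h $$ (i,j) * kv j = 0"
    proof (cases "even j")
      case ej: True
      have "j \<noteq> i+1" "i \<noteq> j+1" using ej True by presburger+
      then show ?thesis using j assms(5) by (simp add: A_idx)
    next
      case False then show ?thesis by (simp add: kv_def)
    qed
  qed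
next
  case False
  then obtain m where m: "i = 2*m+1" by (metis oddE)
  have iN: "2*m+1 \<le> N" using assms(4,5) m by presburger
  have "(\<Sum>j<N+2. Amat N ha hb h $$ (i,j) * kv j) =
     (\<Sum>j<N+2. (if j = 2*m then - aa (2*m) * gg m else 0) + (if j = 2*m+2 then aa (2*m+1) * gg (Suc m) else 0))"
  proof (rule sum.cong[OF refl])
    fix j assume j: "j \<in> {..<N+2}"
    then have j': "j < N+2" by simp
    show "Amat N ha hb h $$ (i,j) * kv j = (if j = 2*m then - aa (2*m) * gg m else 0) + (if j = 2*m+2 then aa (2*m+1) * gg (Suc m) else 0)"
    proof -
      consider "j = 2*m" | "j = 2*m+2" | "j \<noteq> 2*m" "j \<noteq> 2*m+2" by blast
      then show ?thesis
      proof cases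
        case 1
        have "kv j = gg m" using 1 by (simp add: kv_def)
        moreover have "Amat N ha hb h $$ (i,j) = - aa (2*m)" using 1 m j' assms(5) by (simp add: A_idx)
        ultimately show ?thesis using 1 by simp
      next
        case 2
        have "kv j = gg (Suc m)" using 2 by (simp add: kv_def)
        moreover have "Amat N ha hb h $$ (i,j) = aa (2*m+1)" using 2 m j' assms(5) by (simp add: A_idx)
        ultimately show ?thesis using 2 by simp
      next
        case 3
        then have "j \<noteq> i+1" "i \<noteq> j+1" using m by auto
        then have "Amat N ha hb h $$ (i,j) = 0" using j' assms(5) by (simp add: A_idx)
        then show ?thesis using 3 by simp
      qed
    qed
  qed
  also have "\<dots> = - aa (2*m) * gg m + aa (2*m+1) * gg (Suc m)"
    using iN by (simp add: sum.distrib)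
  also have "\<dots> = 0" using aa_nz[OF assms(1-3) iN] by (simp add: gg_Suc)
  finally show ?thesis .
qed

lemma rr_kv: assumes "ha \<noteq> 0" "hb \<noteq> 0" "\<forall>i\<in>{1..N-1}. h i \<noteq> 0" "odd N"
  shows "(\<Sum>j<N+2. rr k j * kv j) = 0"
proof (induction k)
  case 0
  have "(\<Sum>j<N+2. rr 0 j * kv j) = (\<Sum>j<N+2. if j = 1 then kv 1 else 0)"
    by (rule sum.cong, auto simp: rr_0)
  then show ?case by (simp add: kv_def)
next
  case (Suc k)
  have "(\<Sum>j<N+2. rr (Suc k) j * kv j) = (\<Sum>j<N+2. \<Sum>i<N+2. rr k i * Amat N ha hb h $$ (i,j) * kv j)"
    by (intro sum.cong refl) (simp only: rr_Suc sum_distrib_right lessThan_iff)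
  also have "\<dots> = (\<Sum>i<N+2. rr k i * (\<Sum>j<N+2. Amat N ha hb h $$ (i,j) * kv j))"
    by (subst sum.swap) (simp add: sum_distrib_left mult.assoc)
  also have "\<dots> = 0" using A_kv[OF assms] by simp
  finally show ?case .
qed

lemma P_carrier: "Pmat N ha hb h \<in> carrier_mat (N+2) (N+2)"
  by (simp add: Pmat_def)

lemma P_dims[simp]: "dim_row (Pmat N ha hb h) = N+2" "dim_col (Pmat N ha hb h) = N+2"
  by (simp_all add: Pmat_def)

lemma P_idx: "i < N+2 \<Longrightarrow> j < N+2 \<Longrightarrow> Pmat N ha hb h $$ (i,j) =
   (if i \<le> N then rr i j else if j = N+1 then 1 else 0)"
  by (simp add: Pmat_def rr_def)

lemma prod_aa: "(\<Prod>i\<in>{1..Suc k}. aa i) = hb * (\<Prod>i\<in>{1..k}. h i)"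
proof (induction k)
  case 0 then show ?case by (simp add: aa_def coef_def)
next
  case (Suc k)
  have "(\<Prod>i\<in>{1..Suc (Suc k)}. aa i) = (\<Prod>i\<in>{1..Suc k}. aa i) * aa (Suc (Suc k))"
    by (simp add: prod.cl_ivl_Suc)
  also have "aa (Suc (Suc k)) = h (Suc k)" by (simp add: aa_def coef_def)
  also have "(\<Prod>i\<in>{1..Suc k}. aa i) = hb * (\<Prod>i\<in>{1..k}. h i)" by (rule Suc.IH)
  also have "hb * (\<Prod>i\<in>{1..k}. h i) * h (Suc k) = hb * (\<Prod>i\<in>{1..Suc k}. h i)"
    by (simp add: prod.cl_ivl_Suc)
  finally show ?case .
qed

lemma pvec_val: assumes "N \<ge> 1"
  shows "pvec N ha hb h = vec (N+1) (\<lambda>i. if i = N then hb * (\<Prod>i=1..N-1. h i) else 0)"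
proof (rule eq_vecI)
  fix i assume i: "i < dim_vec (vec (N+1) (\<lambda>i. if i = N then hb * (\<Prod>i=1..N-1. h i) else 0))"
  then have i': "i < N+1" by simp
  show "pvec N ha hb h $ i = vec (N+1) (\<lambda>i. if i = N then hb * (\<Prod>i=1..N-1. h i) else 0) $ i"
  proof (cases "i = N")
    case True
    have "rr N (N+1) = (\<Prod>i\<in>{1..Suc (N-1)}. aa i)" using rr_lead[of N] assms by simp
    then show ?thesis using True i' prod_aa[of "N-1"] by (simp add: pvec_def P_idx)
  next
    case False
    then show ?thesis using i' rr_zero[of "N+1" i] by (simp add: pvec_def P_idx)
  qed
qed (simp add: pvec_def)

lemma det_P_Pbar: "det (Pmat N ha hb h) = det (Pbar N ha hb h)"
proof -
  let ?P = "Pmat N ha hb h"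
  have "det ?P = (\<Sum>j<N+2. ?P $$ (N+1,j) * cofactor ?P (N+1) j)"
    by (rule laplace_expansion_row[OF P_carrier]) simp
  also have "\<dots> = (\<Sum>j<N+2. if j = N+1 then cofactor ?P (N+1) (N+1) else 0)"
    by (intro sum.cong refl) (simp add: P_idx)
  also have "\<dots> = cofactor ?P (N+1) (N+1)" by simp
  also have "\<dots> = det (mat_delete ?P (N+1) (N+1))"
    by (simp add: cofactor_def)
  also have "mat_delete ?P (N+1) (N+1) = Pbar N ha hb h"
    by (rule eq_matI) (auto simp: mat_delete_def Pbar_def Pmat_def)
  finally show ?thesis .
qed

lemma det_P: assumes "ha \<noteq> 0" "hb \<noteq> 0" "\<forall>i\<in>{1..N-1}. h i \<noteq> 0" "odd N"
  shows "det (Pmat N ha hb h) = kv (N+1) * (\<Prod>i<N+1. \<Prod>l\<in>{1..i}. aa l)"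
proof -
  let ?P = "Pmat N ha hb h"
  define x where "x = vec (N+2) kv"
  define b where "b = vec (N+2) (\<lambda>i. if i = N+1 then kv (N+1) else 0)"
  have x: "x \<in> carrier_vec (N+2)" by (simp add: x_def)
  have Px: "?P *\<^sub>v x = b"
  proof (rule eq_vecI)
    fix i assume "i < dim_vec b"
    then have i: "i < N+2" by (simp add: b_def)
    have "(?P *\<^sub>v x) $ i = (\<Sum>j<N+2. ?P $$ (i,j) * kv j)"
      using i P_carrier by (simp add: x_def scalar_prod_def lessThan_atLeast0)
    also have "\<dots> = b $ i"
    proof (cases "i \<le> N")
      case True
      then have "(\<Sum>j<N+2. ?P $$ (i,j) * kv j) = (\<Sum>j<N+2. rr i j * kv j)"
        by (intro sum.cong refl) (simp add: P_idx)
      then show ?thesis using rr_kv[OF assms] True i by (simp add: b_def)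
    next
      case False
      then have "(\<Sum>j<N+2. ?P $$ (i,j) * kv j) = (\<Sum>j<N+2. if j = N+1 then kv (N+1) else 0)"
        using i by (intro sum.cong refl) (simp add: P_idx)
      then show ?thesis using False i by (simp add: b_def)
    qed
    finally show "(?P *\<^sub>v x) $ i = b $ i" .
  qed (simp add: b_def P_carrier)
  have "det (replace_col ?P (?P *\<^sub>v x) 0) = x $ 0 * det ?P"
    by (rule cramer_lemma_mat[OF P_carrier x]) simp
  also have "x $ 0 = 1" by (simp add: x_def kv_def gg_def)
  finally have 1: "det ?P = det (replace_col ?P b 0)" using Px by simp
  define Q where "Q = replace_col ?P b 0"
  have Q: "Q \<in> carrier_mat (N+2) (N+2)" using P_carrier by (simp add: Q_def replace_col_def)
  have "det Q = (\<Sum>i<N+2. Q $$ (i,0) * cofactor Q i 0)"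
    by (rule laplace_expansion_column[OF Q]) simp
  also have "\<dots> = (\<Sum>i<N+2. if i = N+1 then kv (N+1) * cofactor Q (N+1) 0 else 0)"
    by (intro sum.cong refl) (auto simp: Q_def replace_col_def b_def P_carrier)
  also have "\<dots> = kv (N+1) * cofactor Q (N+1) 0" by simp
  also have "cofactor Q (N+1) 0 = det (mat_delete Q (N+1) 0)"
    using assms(4) by (simp add: cofactor_def)
  also have "det (mat_delete Q (N+1) 0) = prod_list (diag_mat (mat_delete Q (N+1) 0))"
  proof (rule det_lower_triangular)
    show "mat_delete Q (N+1) 0 \<in> carrier_mat (N+1) (N+1)" using mat_delete_carrier[OF Q] by simp
    fix i j assume ij: "i < j" "j < N+1"
    then show "mat_delete Q (N+1) 0 $$ (i,j) = 0"
      using Q rr_zero[of "Suc j" i]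
      by (auto simp: mat_delete_def Q_def replace_col_def P_idx)
  qed
  also have "\<dots> = (\<Prod>i<N+1. \<Prod>l\<in>{1..i}. aa l)"
  proof -
    have "diag_mat (mat_delete Q (N+1) 0) = map (\<lambda>i. \<Prod>l\<in>{1..i}. aa l) [0..<N+1]"
      using Q by (auto simp: diag_mat_def mat_delete_def Q_def replace_col_def P_idx rr_lead')
    then show ?thesis
      by (simp add: prod.distinct_set_conv_list[symmetric] atLeast0LessThan prod.lessThan_Suc)
  qed
  finally show ?thesis using 1 Q_def by simp
qed

lemma prodL: "(\<Prod>i<Suc (Suc p). \<Prod>l\<in>{1..i}. aa l) = hb ^ Suc p * (\<Prod>i\<in>{1..p}. h i ^ (p+1-i))"
proof (induction p)
  case 0 then show ?case by (simp add: prod.lessThan_Suc aa_def coef_def)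
next
  case (Suc p)
  have "(\<Prod>i<Suc (Suc (Suc p)). \<Prod>l\<in>{1..i}. aa l) = (\<Prod>i<Suc (Suc p). \<Prod>l\<in>{1..i}. aa l) * (\<Prod>l\<in>{1..Suc (Suc p)}. aa l)"
    by (simp add: prod.lessThan_Suc)
  also have "\<dots> = hb ^ Suc p * (\<Prod>i\<in>{1..p}. h i ^ (p+1-i)) * (hb * (\<Prod>i\<in>{1..Suc p}. h i))"
    using Suc.IH prod_aa[of "Suc p"] by simp
  also have "\<dots> = hb ^ Suc (Suc p) * ((\<Prod>i\<in>{1..p}. h i ^ (p+1-i)) * (\<Prod>i\<in>{1..Suc p}. h i))"
    by (simp add: mult_ac)
  also have "(\<Prod>i\<in>{1..p}. h i ^ (p+1-i)) * (\<Prod>i\<in>{1..Suc p}. h i) = (\<Prod>i\<in>{1..Suc p}. h i ^ (Suc p+1-i))"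
    by (rule prod_pow_step[symmetric])
  finally show ?case .
qed

lemma gg_val: "gg (Suc p) = ha * (\<Prod>j=1..p. h (2*j-1)) / (hb * (\<Prod>j=1..p. h (2*j)))"
proof (induction p)
  case 0 then show ?case by (simp add: gg_def aa_def coef_def)
next
  case (Suc p)
  have a1: "aa (2*Suc p) = h (2*Suc p - 1)" by (simp add: aa_def coef_def)
  have a2: "aa (2*Suc p+1) = h (2*Suc p)" by (simp add: aa_def coef_def)
  have "gg (Suc (Suc p)) = gg (Suc p) * (aa (2*Suc p) / aa (2*Suc p+1))" by (rule gg_Suc)
  also have "\<dots> = ha * (\<Prod>j=1..p. h (2*j-1)) / (hb * (\<Prod>j=1..p. h (2*j))) * (h (2*Suc p - 1) / h (2*Suc p))"
    using Suc.IH a1 a2 by simp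
  also have "\<dots> = ha * ((\<Prod>j=1..p. h (2*j-1)) * h (2*Suc p - 1)) / (hb * ((\<Prod>j=1..p. h (2*j)) * h (2*Suc p)))"
    by (simp add: mult_ac)
  also have "\<dots> = ha * (\<Prod>j=1..Suc p. h (2*j-1)) / (hb * (\<Prod>j=1..Suc p. h (2*j)))"
    by (simp only: prod.cl_ivl_Suc) simp
  finally show ?case .
qed

lemma gg_nz: assumes "ha \<noteq> 0" "hb \<noteq> 0" "\<forall>i\<in>{1..N-1}. h i \<noteq> 0" "2*m \<le> N+1"
  shows "gg m \<noteq> 0"
proof -
  have "\<forall>i<m. aa (2*i) \<noteq> 0 \<and> aa (2*i+1) \<noteq> 0"
    using assms(4) by (auto intro!: aa_nz[OF assms(1-3)])
  then show ?thesis by (simp add: gg_def)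
qed

end


theorem lemma4:
  fixes N :: nat and ha hb :: real and h :: "nat \<Rightarrow> real"
  assumes "N \<ge> 3" and "odd N"
    and "ha \<noteq> 0" and "hb \<noteq> 0" and "\<forall>i\<in>{1..N-1}. h i \<noteq> 0"
  defines "D \<equiv> det (Pbar N ha hb h)"
    and "K \<equiv> hb ^ (N - 1) * (\<Prod>i=1..N-2. h i ^ (N - 1 - i))"
  shows "pvec N ha hb h = vec (N+1) (\<lambda>i. if i = N then hb * (\<Prod>i=1..N-1. h i) else 0)
    \<and> D = ha * hb ^ (N - 1) * h (N - 2) ^ 3 *
             (\<Prod>i=1..(N-3) div 2. h (2*i-1) ^ (N + 2 - 2*i) * h (2*i) ^ (N - 1 - 2*i))
    \<and> D \<noteq> 0
    \<and> (\<forall>B. B \<in> carrier_mat (N+1) (N+1) \<and> inverts_mat (Pbar N ha hb h) B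
              \<and> inverts_mat B (Pbar N ha hb h) \<longrightarrow>
           (\<forall>k\<in>{1..N+1}. even k \<longrightarrow> B $$ (k-1, N) = 0)
         \<and> B $$ (0, N) = - K / D
         \<and> (\<forall>k\<in>{3..N}. odd k \<longrightarrow>
              B $$ (k-1, N) = - (K / D) *
                 ((ha * (\<Prod>j=1..(k-3) div 2. h (2*j-1))) /
                  (hb * (\<Prod>j=1..(k-3) div 2. h (2*j))))))"
proof -
  note nz = assms(3,4,5)
  define M where "M = (N-3) div 2"
  have NM: "N = 2*M+3" using assms(1,2) unfolding M_def by presburger
  define L where "L k = (\<Prod>l\<in>{1..k}. aa ha hb h l)" for k
  define Od where "Od = (\<Prod>j=1..M+1. h (2*j-1))"
  define Ev where "Ev = (\<Prod>j=1..M+1. h (2*j))"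
  define G where "G = gg ha hb h (M+2)"
  have hnz: "\<And>i. 1 \<le> i \<Longrightarrow> i \<le> 2*M+2 \<Longrightarrow> h i \<noteq> 0" using assms(5) NM by auto
  have Od_nz: "Od \<noteq> 0"
  proof -
    { fix j assume "j \<in> {1..M+1}" hence "h (2*j-1) \<noteq> 0" by (intro hnz) auto }
    then show ?thesis unfolding Od_def by (subst prod_zero_iff) auto
  qed
  have Ev_nz: "Ev \<noteq> 0"
  proof -
    { fix j assume "j \<in> {1..M+1}" hence "h (2*j) \<noteq> 0" by (intro hnz) auto }
    then show ?thesis unfolding Ev_def by (subst prod_zero_iff) auto
  qed
  have kvN: "kv ha hb h (N+1) = G" using NM by (simp add: kv_def G_def)
  have D1: "D = G * ((\<Prod>i<N. L i) * L N)"
    using det_P[OF nz assms(2)] det_P_Pbar kvN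
    by (simp add: D_def L_def prod.lessThan_Suc)
  have K1: "K = (\<Prod>i<N. L i)"
  proof -
    have e: "N = Suc (Suc (2*M+1))" using NM by simp
    have "(\<Prod>i<N. L i) = hb ^ Suc (2*M+1) * (\<Prod>i\<in>{1..2*M+1}. h i ^ (2*M+1+1-i))"
      unfolding e L_def by (rule prodL)
    also have "\<dots> = K" using NM by (simp add: K_def)
    finally show ?thesis by simp
  qed
  have LN: "L N = hb * (Od * Ev)"
  proof -
    have e2: "N = Suc (2*(M+1))" using NM by simp
    have "L N = hb * (\<Prod>i\<in>{1..2*(M+1)}. h i)" unfolding e2 L_def by (rule prod_aa)
    also have "(\<Prod>i\<in>{1..2*(M+1)}. h i) = Od * Ev" unfolding Od_def Ev_def by (rule prod_split_even)
    finally show ?thesis .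
  qed
  have GG: "G = ha * Od / (hb * Ev)"
    using gg_val[of ha hb h "M+1"] by (simp add: G_def Od_def Ev_def)
  have LNG: "L N * G = ha * Od^2"
    using LN GG nz(2) Ev_nz by (simp add: power2_eq_square field_simps)
  have DK: "D = K * (ha * Od^2)" using D1 K1 LNG by (simp add: mult_ac)
  have Lnz: "L i \<noteq> 0" if i: "i \<le> N" for i
  proof -
    { fix l assume "l \<in> {1..i}" hence "aa ha hb h l \<noteq> 0" using i by (intro aa_nz[OF nz]) auto }
    then show ?thesis unfolding L_def by (subst prod_zero_iff) auto
  qed
  have K_nz: "K \<noteq> 0" using K1 Lnz by simp
  have D_nz: "D \<noteq> 0" using DK K_nz nz(1) Od_nz by simp
  have Dform: "D = ha * hb ^ (N - 1) * h (N - 2) ^ 3 *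
             (\<Prod>i=1..(N-3) div 2. h (2*i-1) ^ (N + 2 - 2*i) * h (2*i) ^ (N - 1 - 2*i))"
  proof -
    have K2: "K = hb ^ (2*M+2) * ((\<Prod>t\<in>{1..M+1}. h (2*t-1) ^ (2*M+2-(2*t-1))) * (\<Prod>t\<in>{1..M}. h (2*t) ^ (2*M+2-2*t)))"
    proof -
      have "K = hb ^ (2*M+2) * (\<Prod>i\<in>{1..2*M+1}. h i ^ (2*M+2-i))"
        using NM by (simp add: K_def)
      also have "(\<Prod>i\<in>{1..2*M+1}. h i ^ (2*M+2-i)) = (\<Prod>t\<in>{1..M+1}. h (2*t-1) ^ (2*M+2-(2*t-1))) * (\<Prod>t\<in>{1..M}. h (2*t) ^ (2*M+2-2*t))"
        by (rule prod_split_odd)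
      finally show ?thesis .
    qed
    have O2: "Od^2 * (\<Prod>t\<in>{1..M+1}. h (2*t-1) ^ (2*M+2-(2*t-1))) = (\<Prod>t\<in>{1..M}. h (2*t-1) ^ (2*M+5-2*t)) * h (2*M+1) ^ 3"
    proof -
      have "Od^2 * (\<Prod>t\<in>{1..M+1}. h (2*t-1) ^ (2*M+2-(2*t-1))) = (\<Prod>t\<in>{1..M+1}. h (2*t-1) ^ 2 * h (2*t-1) ^ (2*M+2-(2*t-1)))"
      proof -
        have "Od^2 = (\<Prod>t\<in>{1..M+1}. h (2*t-1)^2)" unfolding Od_def by (rule prod_power_distrib)
        then show ?thesis by (simp only: prod.distrib)
      qed
      also have "\<dots> = (\<Prod>t\<in>{1..M+1}. h (2*t-1) ^ (2*M+5-2*t))"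
      proof (rule prod.cong[OF refl])
        fix t assume t: "t \<in> {1..M+1}"
        then have "2 + (2*M+2-(2*t-1)) = 2*M+5-2*t" by auto
        then show "h (2*t-1) ^ 2 * h (2*t-1) ^ (2*M+2-(2*t-1)) = h (2*t-1) ^ (2*M+5-2*t)"
          by (metis power_add)
      qed
      also have "\<dots> = (\<Prod>t\<in>{1..M}. h (2*t-1) ^ (2*M+5-2*t)) * h (2*M+1) ^ 3"
        by (simp add: prod.cl_ivl_Suc numeral_3_eq_3)
      finally show ?thesis .
    qed
    have "D = ha * hb ^ (2*M+2) * h (2*M+1) ^ 3 * ((\<Prod>t\<in>{1..M}. h (2*t-1) ^ (2*M+5-2*t)) * (\<Prod>t\<in>{1..M}. h (2*t) ^ (2*M+2-2*t)))"
      using DK K2 O2 by (simp add: mult_ac)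
    also have "\<dots> = ha * hb ^ (N - 1) * h (N - 2) ^ 3 *
             (\<Prod>i=1..(N-3) div 2. h (2*i-1) ^ (N + 2 - 2*i) * h (2*i) ^ (N - 1 - 2*i))"
    proof -
      have "(N-3) div 2 = M" using NM by simp
      moreover have "(\<Prod>t\<in>{1..M}. h (2*t-1) ^ (2*M+5-2*t)) * (\<Prod>t\<in>{1..M}. h (2*t) ^ (2*M+2-2*t))
          = (\<Prod>i=1..M. h (2*i-1) ^ (N + 2 - 2*i) * h (2*i) ^ (N - 1 - 2*i))"
      proof -
        have "(\<Prod>i=1..M. h (2*i-1) ^ (N + 2 - 2*i) * h (2*i) ^ (N - 1 - 2*i)) = (\<Prod>t\<in>{1..M}. h (2*t-1) ^ (2*M+5-2*t) * h (2*t) ^ (2*M+2-2*t))"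
        proof (rule prod.cong[OF refl])
          fix i
          have e1: "N + 2 - 2*i = 2*M+5-2*i" "N - 1 - 2*i = 2*M+2-2*i" using NM by arith+
          show "h (2*i-1) ^ (N + 2 - 2*i) * h (2*i) ^ (N - 1 - 2*i) = h (2*i-1) ^ (2*M+5-2*i) * h (2*i) ^ (2*M+2-2*i)"
            by (simp only: e1)
        qed
        then show ?thesis by (simp only: prod.distrib)
      qed
      ultimately show ?thesis using NM by simp
    qed
    finally show ?thesis .
  qed
  have Binv: "\<forall>B. B \<in> carrier_mat (N+1) (N+1) \<and> inverts_mat (Pbar N ha hb h) B
              \<and> inverts_mat B (Pbar N ha hb h) \<longrightarrow>
           (\<forall>k\<in>{1..N+1}. even k \<longrightarrow> B $$ (k-1, N) = 0)
         \<and> B $$ (0, N) = - K / D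
         \<and> (\<forall>k\<in>{3..N}. odd k \<longrightarrow>
              B $$ (k-1, N) = - (K / D) *
                 ((ha * (\<Prod>j=1..(k-3) div 2. h (2*j-1))) /
                  (hb * (\<Prod>j=1..(k-3) div 2. h (2*j)))))"
  proof (intro allI impI)
    fix B assume B: "B \<in> carrier_mat (N+1) (N+1) \<and> inverts_mat (Pbar N ha hb h) B
              \<and> inverts_mat B (Pbar N ha hb h)"
    define s where "s = - K / D"
    have s': "s * (L N * G) = -1" using DK LNG K_nz D_nz by (simp add: s_def field_simps)
    define x where "x = vec (N+1) (\<lambda>j. s * kv ha hb h j)"
    have Pb: "Pbar N ha hb h \<in> carrier_mat (N+1) (N+1)" by (simp add: Pbar_def)
    have x: "x \<in> carrier_vec (N+1)" by (simp add: x_def)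
    have Px: "Pbar N ha hb h *\<^sub>v x = unit_vec (N+1) N"
    proof (rule eq_vecI)
      fix i assume "i < dim_vec (unit_vec (N+1) N)"
      then have i: "i < N+1" by simp
      have "(Pbar N ha hb h *\<^sub>v x) $ i = (\<Sum>j<N+1. rr N ha hb h i j * (s * kv ha hb h j))"
        using i Pb by (simp add: x_def scalar_prod_def lessThan_atLeast0 Pbar_def P_idx)
      also have "\<dots> = s * ((\<Sum>j<N+2. rr N ha hb h i j * kv ha hb h j) - rr N ha hb h i (N+1) * kv ha hb h (N+1))"
        by (simp add: sum.lessThan_Suc sum_distrib_left algebra_simps)
      also have "\<dots> = s * (- rr N ha hb h i (N+1) * G)"
        using rr_kv[OF nz assms(2)] kvN by simp
      also have "\<dots> = unit_vec (N+1) N $ i"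
      proof (cases "i = N")
        case True
        then have "rr N ha hb h i (N+1) = L N" using rr_lead'[of N N ha hb h] by (simp add: L_def)
        then show ?thesis using True s' i by (simp add: mult_ac)
      next
        case False
        then show ?thesis using i rr_zero[of "N+1" N i ha hb h] by simp
      qed
      finally show "(Pbar N ha hb h *\<^sub>v x) $ i = unit_vec (N+1) N $ i" .
    qed (simp add: Pbar_def)
    have Bc: "B \<in> carrier_mat (N+1) (N+1)" using B by blast
    have Binv2: "inverts_mat B (Pbar N ha hb h)" using B by blast
    have dB: "dim_row B = N+1" using Bc by (rule carrier_matD)
    have BP: "B * Pbar N ha hb h = 1\<^sub>m (N+1)" using Binv2 dB unfolding inverts_mat_def by simp
    have "B *\<^sub>v unit_vec (N+1) N = B *\<^sub>v (Pbar N ha hb h *\<^sub>v x)" using Px by simp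
    also have "\<dots> = (B * Pbar N ha hb h) *\<^sub>v x" by (rule assoc_mult_mat_vec[symmetric, OF Bc Pb x])
    also have "\<dots> = x" using BP x by simp
    finally have "B *\<^sub>v unit_vec (N+1) N = x" .
    note Bx = this
    have dcB: "dim_col B = N+1" using Bc by (rule carrier_matD)
    have col: "B $$ (k, N) = s * kv ha hb h k" if k: "k < N+1" for k
    proof -
      have "(B *\<^sub>v unit_vec (N+1) N) $ k = row B k \<bullet> unit_vec (N+1) N"
        using k dB by (intro index_mult_mat_vec) simp
      also have "\<dots> = row B k $ N" by (rule scalar_prod_right_unit) simp
      also have "\<dots> = B $$ (k, N)" using k dB dcB by simp
      finally have "B $$ (k, N) = x $ k" using Bx by simp
      then show ?thesis using k by (simp add: x_def)
    qed
    show "(\<forall>k\<in>{1..N+1}. even k \<longrightarrow> B $$ (k-1, N) = 0)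
         \<and> B $$ (0, N) = - K / D
         \<and> (\<forall>k\<in>{3..N}. odd k \<longrightarrow>
              B $$ (k-1, N) = - (K / D) *
                 ((ha * (\<Prod>j=1..(k-3) div 2. h (2*j-1))) /
                  (hb * (\<Prod>j=1..(k-3) div 2. h (2*j)))))"
    proof (intro conjI ballI impI)
      fix k assume k: "k \<in> {1..N+1}" "even k"
      then show "B $$ (k-1, N) = 0" using col[of "k-1"] by (auto simp: kv_def)
    next
      show "B $$ (0, N) = - K / D" using col[of 0] by (simp add: kv_def gg_def s_def)
    next
      fix k assume k: "k \<in> {3..N}" "odd k"
      then have k3: "3 \<le> k" "odd k" by auto
      then have kk: "k - 1 = 2 * Suc ((k-3) div 2)" by presburger
      have c1: "B $$ (k-1, N) = s * kv ha hb h (k-1)" by (rule col) (use k in auto)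
      have c2: "kv ha hb h (k-1) = gg ha hb h (Suc ((k-3) div 2))" unfolding kk kv_def by simp
      have "B $$ (k-1, N) = s * gg ha hb h (Suc ((k-3) div 2))" using c1 c2 by simp
      then show "B $$ (k-1, N) = - (K / D) *
                 ((ha * (\<Prod>j=1..(k-3) div 2. h (2*j-1))) /
                  (hb * (\<Prod>j=1..(k-3) div 2. h (2*j))))"
        by (simp add: gg_val s_def)
    qed
  qed
  have pv: "pvec N ha hb h = vec (N+1) (\<lambda>i. if i = N then hb * (\<Prod>i=1..N-1. h i) else 0)"
    using assms(1) by (intro pvec_val) simp
  show ?thesis using pv Dform D_nz Binv by blast
qed

end
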